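(* Let $n\geqslant m\geqslant2$ with $n+m$ even. Then $\mathrm{SR}(n,m)-\mathrm{DR}(n,m)=\left\lceil\frac{m}{2}\right\rceil$.
   Context: Let $p,q$ be distinct primes and $n,m$ positive integers. In $C_{p^nq^m}$ let $C_{p^aq^x}$ be the unique subgroup of order $p^aq^x$, and write $(a,x;b,y)$ for the pair of subgroups $(C_{p^aq^x},C_{p^bq^y})$ with $0\leqslant a\leqslant b\leqslant n$, $0\leqslant x\leqslant y\leqslant m$, $(a,x)\neq(b,y)$. Its midpoint is $(a+x+b+y)/2$, and $R_M$ is the set of all such pairs with midpoint $M$. The simple rainbow number $\mathrm{SR}(n,m)$ is $|R_{(n+m)/2}|$ if $n+m$ is odd, and $|R_{(n+m-1)/2}|$ (which equals $|R_{(n+m+1)/2}|$) if $n+m$ is even. For $n,m\geqslant2$ with $n+m$ even, the double rainbow number is $\mathrm{DR}(n,m)=|R_{(n+m)/2}|$. *)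

theory Defs
  imports Main
begin

text \<open>A pair of subgroups (C_{p^a q^x}, C_{p^b q^y}) of C_{p^n q^m} is encoded by the
  exponent tuple (a,x,b,y), with 0 \<le> a \<le> b \<le> n, 0 \<le> x \<le> y \<le> m, (a,x) \<noteq> (b,y).
  Since the midpoint (a+x+b+y)/2 may be a half-integer, we index by twice the midpoint.\<close>

definition pairs :: "nat \<Rightarrow> nat \<Rightarrow> (nat \<times> nat \<times> nat \<times> nat) set" where
  "pairs n m = {(a, x, b, y). a \<le> b \<and> b \<le> n \<and> x \<le> y \<and> y \<le> m \<and> (a, x) \<noteq> (b, y)}"

definition R2 :: "nat \<Rightarrow> nat \<Rightarrow> nat \<Rightarrow> (nat \<times> nat \<times> nat \<times> nat) set" where
  "R2 n m T = {(a, x, b, y) \<in> pairs n m. a + x + b + y = T}"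

definition SR :: "nat \<Rightarrow> nat \<Rightarrow> nat" where
  "SR n m = (if odd (n + m) then card (R2 n m (n + m)) else card (R2 n m (n + m - 1)))"

definition DR :: "nat \<Rightarrow> nat \<Rightarrow> nat" where
  "DR n m = card (R2 n m (n + m))"

end

theory Submission
  imports Defs
begin

definition Qs :: "nat \<Rightarrow> nat \<Rightarrow> nat \<Rightarrow> (nat \<times> nat \<times> nat \<times> nat) set" where
  "Qs n m T = {(a, x, b, y). a \<le> b \<and> b \<le> n \<and> x \<le> y \<and> y \<le> m \<and> a + x + b + y = T}"

definition Ds :: "nat \<Rightarrow> nat \<Rightarrow> nat \<Rightarrow> (nat \<times> nat \<times> nat \<times> nat) set" where
  "Ds n m T = {(a, x, b, y). a = b \<and> x = y \<and> a \<le> n \<and> x \<le> m \<and> a + x + b + y = T}"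

definition XY :: "nat \<Rightarrow> (nat \<times> nat) set" where
  "XY m = {(x, y). x \<le> y \<and> y \<le> m}"

definition cs :: "nat \<Rightarrow> nat \<Rightarrow> nat \<Rightarrow> nat" where
  "cs n T t = (if t \<le> T then Suc ((T - t) div 2) - (T - t - n) else 0)"

lemma finite_XY: "finite (XY m)"
proof -
  have "XY m \<subseteq> {0..m} \<times> {0..m}" by (auto simp: XY_def)
  then show ?thesis by (rule finite_subset) simp
qed

lemma finite_Qs: "finite (Qs n m T)"
proof -
  have "Qs n m T \<subseteq> {0..n} \<times> {0..m} \<times> {0..n} \<times> {0..m}" by (auto simp: Qs_def)
  then show ?thesis by (rule finite_subset) simp
qed

lemma card_slice: "card {(a, b). a \<le> b \<and> b \<le> n \<and> a + b + t = T} = cs n T t"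
proof (cases "t \<le> T")
  case True
  have "{(a, b). a \<le> b \<and> b \<le> n \<and> a + b + t = T} = (\<lambda>a. (a, T - t - a)) ` {T - t - n .. (T - t) div 2}"
    using True by (auto simp: image_iff)
  moreover have "inj_on (\<lambda>a. (a, T - t - a)) {T - t - n .. (T - t) div 2}" by (auto simp: inj_on_def)
  ultimately show ?thesis using True by (simp add: card_image cs_def)
next
  case False
  then have "{(a, b). a \<le> b \<and> b \<le> n \<and> a + b + t = T} = {}" by auto
  then show ?thesis using False by (simp add: cs_def)
qed

lemma card_Qs: "card (Qs n m T) = (\<Sum>p\<in>XY m. cs n T (fst p + snd p))"
proof -
  define S where "S = (\<lambda>p::nat\<times>nat. {(a, b). a \<le> b \<and> b \<le> n \<and> a + b + (fst p + snd p) = T})"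
  have fS: "finite (S p)" for p
  proof -
    have "S p \<subseteq> {0..n} \<times> {0..n}" by (auto simp: S_def)
    then show ?thesis by (rule finite_subset) simp
  qed
  have eq: "Qs n m T = (\<lambda>((x, y), (a, b)). (a, x, b, y)) ` (SIGMA p:XY m. S p)"
    by (auto simp: Qs_def XY_def S_def image_iff add_ac)
  have inj: "inj_on (\<lambda>((x, y), (a, b)). (a, x, b, y)) (SIGMA p:XY m. S p)"
    by (auto simp: inj_on_def)
  have "card (Qs n m T) = card (SIGMA p:XY m. S p)" using eq inj by (simp add: card_image)
  also have "\<dots> = (\<Sum>p\<in>XY m. card (S p))" using finite_XY fS by simp
  also have "\<dots> = (\<Sum>p\<in>XY m. cs n T (fst p + snd p))"
    by (rule sum.cong) (simp_all add: S_def card_slice)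
  finally show ?thesis .
qed

lemma R2_eq: "R2 n m T = Qs n m T - Ds n m T"
  by (auto simp: R2_def pairs_def Qs_def Ds_def)

lemma Ds_sub: "Ds n m T \<subseteq> Qs n m T"
  by (auto simp: Qs_def Ds_def)

lemma card_R2: "card (R2 n m T) = card (Qs n m T) - card (Ds n m T)"
  unfolding R2_eq by (rule card_Diff_subset[OF finite_subset[OF Ds_sub finite_Qs] Ds_sub])

lemma Ds_odd: "odd T \<Longrightarrow> Ds n m T = {}"
  by (auto simp: Ds_def)

lemma card_Ds_mid:
  assumes "m \<le> n" "even (n + m)"
  shows "card (Ds n m (n + m)) = m + 1"
proof -
  define h where "h = (n + m) div 2"
  have h2: "n + m = 2 * h" using assms(2) by (simp add: h_def)
  have "Ds n m (n + m) = (\<lambda>x. (h - x, x, h - x, x)) ` {0..m}"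
    using assms(1) h2 by (auto simp: Ds_def image_iff)
  moreover have "inj_on (\<lambda>x. (h - x, x, h - x, x)) {0..m}" by (auto simp: inj_on_def)
  ultimately show ?thesis by (simp add: card_image)
qed

lemma delta_eq: "1 \<le> m \<Longrightarrow> t \<le> 2*m \<Longrightarrow> m \<le> (n::nat) \<Longrightarrow> even (n+m) \<Longrightarrow>
  int (if t \<le> n+m then Suc ((n+m-t) div 2) - (n+m-t-n) else 0)
  - int (if t \<le> n+m-1 then Suc ((n+m-1-t) div 2) - (n+m-1-t-n) else 0)
  = (if m \<le> t then (if even t then 1 else 0) else (if odd t then -1 else 0))"
proof -
  assume h0: "1 \<le> m" and h: "t \<le> 2*m" "m \<le> n" "even (n+m)"
  obtain k where k: "n + m = 2*k" using h(3) by (rule evenE)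
  show ?thesis
  proof (cases "even t")
    case True
    then obtain j where j: "t = 2*j" by (rule evenE)
    have d1: "(2*k - 2*j) div 2 = k - j" by (simp flip: diff_mult_distrib2)
    have d2: "j < k \<Longrightarrow> (2*k - Suc (2*j)) div 2 = k - j - 1"
    proof -
      assume "j < k" then have "2*k - Suc (2*j) = 2*(k-j-1) + 1" by simp
      then show ?thesis by simp
    qed
    show ?thesis
    proof (cases "j < k")
      case True
      then show ?thesis using h k j d1 d2 by (cases "m \<le> t") auto
    next
      case False
      then have "j = k" using h k j by linarith
      moreover have "k > 0" using h0 h k by linarith
      ultimately show ?thesis using h k j by auto
    qed
  next
    case False
    then obtain j where j: "t = 2*j+1" by (rule oddE)
    have jk: "j < k" using h k j by linarith
    then have e1: "2*k - Suc (2*j) = 2*(k-j-1) + 1" and e2: "2*k - Suc (Suc (2*j)) = 2*(k-j-1)" by simp_all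
    have "2*j + 1 \<le> 2*k - 1" using jk by linarith
    then show ?thesis using h k j e1 e2 by (cases "m \<le> t") auto
  qed
qed

definition Es :: "nat \<Rightarrow> (nat \<times> nat) set" where
  "Es m = {(x, y). x \<le> y \<and> y \<le> m \<and> m \<le> x + y \<and> even (x + y)}"

definition Os :: "nat \<Rightarrow> (nat \<times> nat) set" where
  "Os m = {(x, y). x \<le> y \<and> y \<le> m \<and> x + y < m \<and> odd (x + y)}"

lemma card_Es_Os: "card (Es m) = card (Os m) + (Suc m - (m + 1) div 2)"
proof -
  have fO: "finite (Os m)"
  proof -
    have "Os m \<subseteq> XY m" by (auto simp: Os_def XY_def)
    then show ?thesis using finite_XY by (rule finite_subset)
  qed
  have eq: "Es m = (\<lambda>(x, y). (m - y - 1, m - x)) ` Os m \<union> (\<lambda>z. (z, z)) ` {(m + 1) div 2 .. m}"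
  proof (rule set_eqI, rule iffI)
    fix p assume "p \<in> Es m"
    then obtain x y where p: "p = (x, y)" "x \<le> y" "y \<le> m" "m \<le> x + y" "even (x + y)"
      by (auto simp: Es_def)
    show "p \<in> (\<lambda>(x, y). (m - y - 1, m - x)) ` Os m \<union> (\<lambda>z. (z, z)) ` {(m + 1) div 2 .. m}"
    proof (cases "x = y")
      case True
      then show ?thesis using p by (auto simp: image_iff)
    next
      case False
      have "(m - y, m - x - 1) \<in> Os m" using p False by (auto simp: Os_def)
      moreover have "p = (\<lambda>(x, y). (m - y - 1, m - x)) (m - y, m - x - 1)" using p False by auto
      ultimately show ?thesis by blast
    qed
  next
    fix p assume "p \<in> (\<lambda>(x, y). (m - y - 1, m - x)) ` Os m \<union> (\<lambda>z. (z, z)) ` {(m + 1) div 2 .. m}"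
    then show "p \<in> Es m"
    proof
      assume "p \<in> (\<lambda>(x, y). (m - y - 1, m - x)) ` Os m"
      then obtain x y where "(x, y) \<in> Os m" "p = (m - y - 1, m - x)" by auto
      then show ?thesis by (auto simp: Os_def Es_def)
    next
      assume "p \<in> (\<lambda>z. (z, z)) ` {(m + 1) div 2 .. m}"
      then show ?thesis by (auto simp: Es_def)
    qed
  qed
  have disj: "(\<lambda>(x, y). (m - y - 1, m - x)) ` Os m \<inter> (\<lambda>z. (z, z)) ` {(m + 1) div 2 .. m} = {}"
    by (auto simp: Os_def)
  have inj: "inj_on (\<lambda>(x, y). (m - y - 1, m - x)) (Os m)"
    by (auto simp: inj_on_def Os_def)
  have "card (Es m) = card ((\<lambda>(x, y). (m - y - 1, m - x)) ` Os m) + card ((\<lambda>z. (z, z)) ` {(m + 1) div 2 .. m})"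
    unfolding eq using fO disj by (simp add: card_Un_disjoint)
  also have "\<dots> = card (Os m) + (Suc m - (m + 1) div 2)"
    using inj by (simp add: card_image inj_on_def)
  finally show ?thesis .
qed

definition dl :: "nat \<Rightarrow> nat \<Rightarrow> int" where
  "dl m t = (if m \<le> t then (if even t then 1 else 0) else (if odd t then -1 else 0))"

lemma sum_dl: "(\<Sum>p\<in>XY m. dl m (fst p + snd p)) = int (card (Es m)) - int (card (Os m))"
proof -
  have sub: "Es m \<union> Os m \<subseteq> XY m" by (auto simp: Es_def Os_def XY_def)
  have fE: "finite (Es m)" and fO: "finite (Os m)" using sub finite_XY by (auto intro: finite_subset)
  have "(\<Sum>p\<in>XY m. dl m (fst p + snd p)) = (\<Sum>p\<in>Es m \<union> Os m. dl m (fst p + snd p))"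
    by (rule sum.mono_neutral_right[OF finite_XY sub]) (auto simp: Es_def Os_def XY_def dl_def)
  also have "\<dots> = (\<Sum>p\<in>Es m. dl m (fst p + snd p)) + (\<Sum>p\<in>Os m. dl m (fst p + snd p))"
    by (rule sum.union_disjoint[OF fE fO]) (auto simp: Es_def Os_def)
  also have "(\<Sum>p\<in>Es m. dl m (fst p + snd p)) = (\<Sum>p\<in>Es m. 1)"
    by (rule sum.cong) (auto simp: Es_def dl_def)
  also have "(\<Sum>p\<in>Os m. dl m (fst p + snd p)) = (\<Sum>p\<in>Os m. -1)"
    by (rule sum.cong) (auto simp: Os_def dl_def)
  finally show ?thesis by simp
qed

theorem lemma7p11:
  fixes n m :: nat
  assumes "m \<ge> 2" and "n \<ge> m" and "even (n + m)"
  shows "int (SR n m) - int (DR n m) = int ((m + 1) div 2)"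
proof -
  have SR: "SR n m = card (Qs n m (n + m - 1))"
    using assms by (simp add: SR_def card_R2 Ds_odd)
  have DRc: "card (Ds n m (n + m)) = m + 1" using assms card_Ds_mid by simp
  have dsub: "card (Ds n m (n + m)) \<le> card (Qs n m (n + m))"
    using Ds_sub finite_Qs by (rule card_mono[rotated])
  have DR: "int (DR n m) = int (card (Qs n m (n + m))) - int (m + 1)"
    using dsub DRc by (simp add: DR_def card_R2 of_nat_diff)
  have "int (card (Qs n m (n + m))) - int (card (Qs n m (n + m - 1)))
      = (\<Sum>p\<in>XY m. int (cs n (n + m) (fst p + snd p)) - int (cs n (n + m - 1) (fst p + snd p)))"
    by (simp add: card_Qs sum_subtractf)
  also have "\<dots> = (\<Sum>p\<in>XY m. dl m (fst p + snd p))"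
  proof (rule sum.cong[OF refl])
    fix p assume "p \<in> XY m"
    then have t2: "fst p + snd p \<le> 2 * m" by (auto simp: XY_def)
    show "int (cs n (n + m) (fst p + snd p)) - int (cs n (n + m - 1) (fst p + snd p)) = dl m (fst p + snd p)"
      unfolding cs_def dl_def by (rule delta_eq) (use assms t2 in auto)
  qed
  also have "\<dots> = int (Suc m - (m + 1) div 2)" using sum_dl card_Es_Os by simp
  finally have key: "int (card (Qs n m (n + m))) - int (card (Qs n m (n + m - 1))) = int (Suc m - (m + 1) div 2)" .
  have "(m + 1) div 2 \<le> Suc m" by simp
  then show ?thesis using key SR DR by (simp add: of_nat_diff)
qed

end
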